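(* Let $\gamma\in(0,2)$. Suppose $\boldsymbol{w}^k\in\mathbb{R}^{n+m}$, $\tilde{\boldsymbol{w}}^k=(\tilde{\boldsymbol{x}}^k,\tilde{\boldsymbol{\lambda}}^k)\in\Omega$, $r_k,s_k>0$ with $r_ks_k>\rho(\mathcal{D}\Phi(\tilde{\boldsymbol{x}}^k)\mathcal{D}\Phi(\tilde{\boldsymbol{x}}^k)^T)$, and that $$f(\boldsymbol{x})-f(\tilde{\boldsymbol{x}}^k)+(\boldsymbol{w}-\tilde{\boldsymbol{w}}^k)^T\{\boldsymbol{\Gamma}(\tilde{\boldsymbol{w}}^k)+\boldsymbol{\Sigma}_k(\tilde{\boldsymbol{w}}^k-\boldsymbol{w}^k)\}\ge 0\quad\forall\,\boldsymbol{w}=(\boldsymbol{x},\boldsymbol{\lambda})\in\Omega,$$ and let $\boldsymbol{w}^{k+1}=\boldsymbol{w}^k-\gamma(\boldsymbol{w}^k-\tilde{\boldsymbol{w}}^k)$. Then for every $\boldsymbol{w}^*\in\Omega^*$, $$\|\boldsymbol{w}^{k+1}-\boldsymbol{w}^*\|_{\boldsymbol{\Sigma}_k}^2\le\|\boldsymbol{w}^k-\boldsymbol{w}^*\|_{\boldsymbol{\Sigma}_k}^2-\gamma(2-\gamma)\|\tilde{\boldsymbol{w}}^k-\boldsymbol{w}^k\|_{\boldsymbol{\Sigma}_k}^2.$$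
   Context: Standing setting: $\mathcal{X}\subset\mathbb{R}^n$ nonempty closed convex; $f:\mathbb{R}^n\to\mathbb{R}$ convex (not necessarily differentiable); $\phi_1,\dots,\phi_m:\mathbb{R}^n\to\mathbb{R}$ convex and continuously differentiable; $\Phi(\boldsymbol{x})=(\phi_1(\boldsymbol{x}),\dots,\phi_m(\boldsymbol{x}))^T$ with $m\times n$ Jacobian $\mathcal{D}\Phi(\boldsymbol{x})$ (rows $\nabla\phi_i(\boldsymbol{x})^T$). The problem is $\min\{f(\boldsymbol{x})\mid \phi_i(\boldsymbol{x})\le0,\ i=1,\dots,m,\ \boldsymbol{x}\in\mathcal{X}\}$. $\mathcal{Z}=\mathbb{R}^m_+$, $\Omega=\mathcal{X}\times\mathcal{Z}$, $\boldsymbol{w}=(\boldsymbol{x},\boldsymbol{\lambda})$, $\boldsymbol{\Gamma}(\boldsymbol{w})=(\mathcal{D}\Phi(\boldsymbol{x})^T\boldsymbol{\lambda},\,-\Phi(\boldsymbol{x}))$. $\Omega^*$ is the (assumed nonempty) set of $\boldsymbol{w}^*=(\boldsymbol{x}^*,\boldsymbol{\lambda}^* )\in\Omega$ with $f(\boldsymbol{x})-f(\boldsymbol{x}^* )+(\boldsymbol{w}-\boldsymbol{w}^* )^T\boldsymbol{\Gamma}(\boldsymbol{w}^* )\ge0$ for all $\boldsymbol{w}\in\Omega$ (equivalently, saddle points of the Lagrangian $f(\boldsymbol{x})+\boldsymbol{\lambda}^T\Phi(\boldsymbol{x})$ over $\mathcal{X}\times\mathbb{R}^m_+$). The relaxed-PPA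 proximal matrix is the symmetric matrix $\boldsymbol{\Sigma}_k=\begin{pmatrix} r_k\boldsymbol{I}_n & -\mathcal{D}\Phi(\tilde{\boldsymbol{x}}^k)^T\\ -\mathcal{D}\Phi(\tilde{\boldsymbol{x}}^k) & s_k\boldsymbol{I}_m\end{pmatrix}$, and $\|\boldsymbol{v}\|_{\boldsymbol{H}}^2=\boldsymbol{v}^T\boldsymbol{H}\boldsymbol{v}$; $\rho(\cdot)$ is the spectral radius. The variational inequality in the hypothesis is what the customized PPA step produces: $\tilde{\boldsymbol{x}}^k\in\arg\min_{\boldsymbol{x}\in\mathcal{X}}\{f(\boldsymbol{x})+(\boldsymbol{\lambda}^k)^T\Phi(\boldsymbol{x})+\frac{r_k}{2}\|\boldsymbol{x}-\boldsymbol{x}^k\|^2\}$ and $\tilde{\boldsymbol{\lambda}}^k=P_{\mathbb{R}^m_+}\big(\boldsymbol{\lambda}^k+\frac1{s_k}[\Phi(\tilde{\boldsymbol{x}}^k)+\mathcal{D}\Phi(\tilde{\boldsymbol{x}}^k)(\tilde{\boldsymbol{x}}^k-\boldsymbol{x}^k)]\big)$ with $\boldsymbol{\lambda}^k\ge0$. *)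

theory Defs
  imports "HOL-Analysis.Analysis"
begin

definition spectral_radius :: "real^'m^'m \<Rightarrow> real" where
  "spectral_radius A =
     Max {cmod z | z. det (mat z - (\<chi> i j. complex_of_real (A $ i $ j))) = 0}"

text \<open>Block proximal matrix Sigma = [[r I, -D^T], [-D, s I]] applied to v = (x, l).\<close>
definition Sigma_mult ::
  "real \<Rightarrow> real \<Rightarrow> real^'n^'m \<Rightarrow> ((real^'n) \<times> (real^'m)) \<Rightarrow> ((real^'n) \<times> (real^'m))" where
  "Sigma_mult r s D v = (r *\<^sub>R fst v - transpose D *v snd v, s *\<^sub>R snd v - D *v fst v)"

definition Sigma_norm2 ::
  "real \<Rightarrow> real \<Rightarrow> real^'n^'m \<Rightarrow> ((real^'n) \<times> (real^'m)) \<Rightarrow> real" where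
  "Sigma_norm2 r s D v = v \<bullet> Sigma_mult r s D v"

definition Gamma_op ::
  "(real^'n \<Rightarrow> real^'m) \<Rightarrow> (real^'n \<Rightarrow> real^'n^'m) \<Rightarrow> ((real^'n) \<times> (real^'m)) \<Rightarrow> ((real^'n) \<times> (real^'m))" where
  "Gamma_op Phi DPhi w = (transpose (DPhi (fst w)) *v snd w, - Phi (fst w))"

definition Omega :: "(real^'n) set \<Rightarrow> ((real^'n) \<times> (real^'m)) set" where
  "Omega X = X \<times> {l. \<forall>i. 0 \<le> l $ i}"

definition Omega_star ::
  "(real^'n \<Rightarrow> real) \<Rightarrow> (real^'n \<Rightarrow> real^'m) \<Rightarrow> (real^'n \<Rightarrow> real^'n^'m) \<Rightarrow> (real^'n) set
     \<Rightarrow> ((real^'n) \<times> (real^'m)) set" where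
  "Omega_star f Phi DPhi X = {ws \<in> Omega X. \<forall>w \<in> Omega X.
      f (fst w) - f (fst ws) + (w - ws) \<bullet> Gamma_op Phi DPhi ws \<ge> 0}"

end

theory Submission
  imports Defs
begin

lemma grad_ineq:
  fixes g :: "'a::real_normed_vector \<Rightarrow> real"
  assumes cv: "convex_on UNIV g" and d: "(g has_derivative g') (at x)"
  shows "g y \<ge> g x + g' (y - x)"
proof -
  define h where "h t = g (x + t *\<^sub>R (y - x))" for t :: real
  have lin: "linear g'" using d has_derivative_linear by blast
  have hc: "convex_on UNIV h"
    unfolding convex_on_def h_def
  proof (intro conjI allI impI ballI)
    show "convex (UNIV::real set)" by simp
  next
    fix a b u v :: real assume uv: "0 \<le> u" "0 \<le> v" "u + v = 1"
    have "x + (u * a + v * b) *\<^sub>R (y - x) = u *\<^sub>R (x + a *\<^sub>R (y - x)) + v *\<^sub>R (x + b *\<^sub>R (y - x))"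
    proof -
      have "u *\<^sub>R (x + a *\<^sub>R (y - x)) + v *\<^sub>R (x + b *\<^sub>R (y - x)) = (u + v) *\<^sub>R x + (u * a + v * b) *\<^sub>R (y - x)"
        by (simp add: scaleR_add_right scaleR_add_left)
      then show ?thesis using uv by simp
    qed
    show "g (x + (u *\<^sub>R a + v *\<^sub>R b) *\<^sub>R (y - x)) \<le> u * g (x + a *\<^sub>R (y - x)) + v * g (x + b *\<^sub>R (y - x))"
    proof -
      have "\<forall>p\<in>UNIV. \<forall>q\<in>UNIV. \<forall>u\<ge>0. \<forall>v\<ge>0. u + v = 1 \<longrightarrow> g (u *\<^sub>R p + v *\<^sub>R q) \<le> u * g p + v * g q"
        using cv by (simp add: convex_on_def)
      then show ?thesis using uv \<open>x + (u * a + v * b) *\<^sub>R (y - x) = _\<close> by simp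
    qed
  qed
  have "((\<lambda>t. x + t *\<^sub>R (y - x)) has_derivative (\<lambda>t. t *\<^sub>R (y - x))) (at 0)"
    by (auto intro!: derivative_eq_intros)
  from has_derivative_compose[OF this, of g g'] d
  have "(h has_derivative (\<lambda>t. g' (t *\<^sub>R (y - x)))) (at 0)"
    unfolding h_def by (simp add: o_def)
  moreover have "(\<lambda>t. g' (t *\<^sub>R (y - x))) = (\<lambda>t. t * g' (y - x))"
    using lin by (simp add: linear_scale)
  ultimately have "(h has_derivative (\<lambda>t. g' (y - x) * t)) (at 0)"
    by (simp add: mult.commute)
  then have "(h has_field_derivative g' (y - x)) (at 0)"
    by (simp add: has_field_derivative_def)
  from convex_on_imp_above_tangent[OF hc _ _ _ this, of 1]
  have "h 1 - h 0 \<ge> g' (y - x) * (1 - 0)" by simp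
  then show ?thesis by (simp add: h_def)
qed

lemma Sm_diff: "Sigma_mult r s D (u - v) = Sigma_mult r s D u - Sigma_mult r s D v"
  by (simp add: Sigma_mult_def matrix_vector_mult_diff_distrib algebra_simps)

lemma Sm_scale: "Sigma_mult r s D (c *\<^sub>R u) = c *\<^sub>R Sigma_mult r s D u"
  by (simp add: Sigma_mult_def matrix_vector_mult_scaleR algebra_simps)

lemma Sm_neg: "Sigma_mult r s D (- u) = - Sigma_mult r s D u"
  using Sm_scale[of r s D "-1" u] by simp

lemma tr_inner: "(x::real^'n) \<bullet> (transpose D *v (l::real^'m)) = (D *v x) \<bullet> l"
  by (metis dot_lmul_matrix vector_transpose_matrix)

lemma tr_inner': "(x::real^'n) \<bullet> ((l::real^'m) v* D) = (D *v x) \<bullet> l"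
  by (metis dot_lmul_matrix inner_commute)

lemma Sm_sym: "u \<bullet> Sigma_mult r s D v = v \<bullet> Sigma_mult r s D u"
proof -
  obtain a b where u: "u = (a, b)" by fastforce
  obtain c e where v: "v = (c, e)" by fastforce
  have "u \<bullet> Sigma_mult r s D v = r * (a \<bullet> c) - (D *v a) \<bullet> e + s * (b \<bullet> e) - b \<bullet> (D *v c)"
    unfolding u v Sigma_mult_def by (simp add: tr_inner tr_inner' inner_diff_right)
  moreover have "v \<bullet> Sigma_mult r s D u = r * (c \<bullet> a) - (D *v c) \<bullet> b + s * (e \<bullet> b) - e \<bullet> (D *v a)"
    unfolding u v Sigma_mult_def by (simp add: tr_inner tr_inner' inner_diff_right)
  ultimately show ?thesis by (simp add: inner_commute)
qed

lemma inner_nonneg_vec: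
  fixes a b :: "real^'m"
  assumes "\<forall>i. 0 \<le> a $ i" "\<forall>i. 0 \<le> b $ i"
  shows "0 \<le> a \<bullet> b"
  unfolding inner_vec_def using assms by (auto intro!: sum_nonneg)

theorem theorem1:
  fixes X :: "(real^'n) set"
    and f :: "real^'n \<Rightarrow> real"
    and Phi :: "real^'n \<Rightarrow> real^'m"
    and DPhi :: "real^'n \<Rightarrow> real^'n^'m"
    and \<gamma> r s :: real
    and wk wt :: "(real^'n) \<times> (real^'m)"
  assumes X_nonempty: "X \<noteq> {}" and X_closed: "closed X" and X_convex: "convex X"
    and f_convex: "convex_on UNIV f"
    and Phi_convex: "\<forall>i. convex_on UNIV (\<lambda>x. Phi x $ i)"
    and Phi_deriv: "\<forall>x. (Phi has_derivative (\<lambda>h. DPhi x *v h)) (at x)"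
    and DPhi_cont: "continuous_on UNIV DPhi"
    and Omega_star_nonempty: "Omega_star f Phi DPhi X \<noteq> {}"
    and gamma: "0 < \<gamma>" "\<gamma> < 2"
    and wt_in: "wt \<in> Omega X"
    and rs_pos: "0 < r" "0 < s"
    and rs_rho: "r * s > spectral_radius (DPhi (fst wt) ** transpose (DPhi (fst wt)))"
    and VI: "\<forall>w \<in> Omega X. f (fst w) - f (fst wt)
              + (w - wt) \<bullet> (Gamma_op Phi DPhi wt + Sigma_mult r s (DPhi (fst wt)) (wt - wk)) \<ge> 0"
  shows "\<forall>ws \<in> Omega_star f Phi DPhi X.
           Sigma_norm2 r s (DPhi (fst wt)) ((wk - \<gamma> *\<^sub>R (wk - wt)) - ws)
             \<le> Sigma_norm2 r s (DPhi (fst wt)) (wk - ws)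
                - \<gamma> * (2 - \<gamma>) * Sigma_norm2 r s (DPhi (fst wt)) (wt - wk)"
proof
  fix ws assume wsS: "ws \<in> Omega_star f Phi DPhi X"
  define D where "D = DPhi (fst wt)"
  define S where "S = Sigma_mult r s D"
  define G where "G = Gamma_op Phi DPhi"
  have ws_in: "ws \<in> Omega X" and wsopt: "\<forall>w \<in> Omega X. f (fst w) - f (fst ws) + (w - ws) \<bullet> G ws \<ge> 0"
    using wsS unfolding Omega_star_def G_def by auto
  have v1: "f (fst ws) - f (fst wt) + (ws - wt) \<bullet> G wt + (ws - wt) \<bullet> S (wt - wk) \<ge> 0"
    using bspec[OF VI ws_in] unfolding G_def S_def D_def inner_add_right by linarith
  have v2: "f (fst wt) - f (fst ws) + (wt - ws) \<bullet> G ws \<ge> 0" using wsopt wt_in by auto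
  obtain xt lt where wt_eq: "wt = (xt, lt)" by fastforce
  obtain xs ls where ws_eq: "ws = (xs, ls)" by fastforce
  have lt0: "\<forall>i. 0 \<le> lt $ i" using wt_in wt_eq by (auto simp: Omega_def)
  have ls0: "\<forall>i. 0 \<le> ls $ i" using ws_in ws_eq by (auto simp: Omega_def)
  have cder: "((\<lambda>x. Phi x $ i) has_derivative (\<lambda>h. (DPhi x *v h) $ i)) (at x)" for i x
    by (rule bounded_linear.has_derivative[OF bounded_linear_vec_nth spec[OF Phi_deriv, of x]])
  have gi: "Phi y $ i \<ge> Phi x $ i + (DPhi x *v (y - x)) $ i" for x y i
    using grad_ineq[OF spec[OF Phi_convex, of i] cder[of i x], of y] by simp
  have A1: "0 \<le> lt \<bullet> (DPhi xt *v (xt - xs) - Phi xt + Phi xs)"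
  proof (rule inner_nonneg_vec[OF lt0], rule allI)
    fix i
    have "DPhi xt *v (xt - xs) = - (DPhi xt *v (xs - xt))"
      by (simp add: matrix_vector_mult_diff_distrib)
    then have "(DPhi xt *v (xt - xs)) $ i = - (DPhi xt *v (xs - xt)) $ i" by simp
    then show "0 \<le> (DPhi xt *v (xt - xs) - Phi xt + Phi xs) $ i" using gi[where x=xt and y=xs and i=i] by simp
  qed
  have A2: "0 \<le> ls \<bullet> (Phi xt - Phi xs - DPhi xs *v (xt - xs))"
  proof (rule inner_nonneg_vec[OF ls0], rule allI)
    fix i
    show "0 \<le> (Phi xt - Phi xs - DPhi xs *v (xt - xs)) $ i" using gi[where x=xs and y=xt and i=i] by simp
  qed
  have mono: "(wt - ws) \<bullet> (G wt - G ws) \<ge> 0"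
  proof -
    have "(wt - ws) \<bullet> (G wt - G ws) = lt \<bullet> (DPhi xt *v (xt - xs) - Phi xt + Phi xs) + ls \<bullet> (Phi xt - Phi xs - DPhi xs *v (xt - xs))"
      unfolding G_def Gamma_op_def wt_eq ws_eq
      by (simp add: tr_inner tr_inner' inner_diff_left inner_diff_right inner_add_right inner_commute
          matrix_vector_mult_diff_distrib algebra_simps)
    then show ?thesis using A1 A2 by simp
  qed
  have key: "(wt - ws) \<bullet> S (wk - wt) \<ge> 0"
  proof -
    have "(ws - wt) \<bullet> S (wt - wk) = (wt - ws) \<bullet> S (wk - wt)"
    proof -
      have "(ws - wt) \<bullet> S (wt - wk) = (- (wt - ws)) \<bullet> S (- (wk - wt))" by simp
      also have "\<dots> = (wt - ws) \<bullet> S (wk - wt)" by (simp only: S_def Sm_neg inner_minus_left inner_minus_right minus_minus)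
      finally show ?thesis .
    qed
    moreover have "(ws - wt) \<bullet> S (wt - wk) \<ge> (wt - ws) \<bullet> (G wt - G ws)"
      using v1 v2 by (simp add: inner_diff_left inner_diff_right)
    ultimately show ?thesis using mono by linarith
  qed
  define a where "a = wk - ws"
  define d where "d = wk - wt"
  have symS: "u \<bullet> S v = v \<bullet> S u" for u v unfolding S_def by (rule Sm_sym)
  have e1: "(wk - \<gamma> *\<^sub>R (wk - wt)) - ws = a - \<gamma> *\<^sub>R d" by (simp add: a_def d_def algebra_simps)
  have e2: "Sigma_norm2 r s D (a - \<gamma> *\<^sub>R d) = a \<bullet> S a - 2 * \<gamma> * (a \<bullet> S d) + \<gamma>^2 * (d \<bullet> S d)"
  proof -
    have "Sigma_norm2 r s D (a - \<gamma> *\<^sub>R d) = (a - \<gamma> *\<^sub>R d) \<bullet> (S a - \<gamma> *\<^sub>R S d)"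
      unfolding Sigma_norm2_def S_def by (simp only: Sm_diff Sm_scale)
    also have "\<dots> = a \<bullet> S a - \<gamma> * (a \<bullet> S d) - \<gamma> * (d \<bullet> S a) + \<gamma> * \<gamma> * (d \<bullet> S d)"
      by (simp add: inner_diff_left inner_diff_right right_diff_distrib)
    also have "\<dots> = a \<bullet> S a - 2 * \<gamma> * (a \<bullet> S d) + \<gamma>^2 * (d \<bullet> S d)"
      using symS[of d a] by (simp add: power2_eq_square)
    finally show ?thesis .
  qed
  have e3: "Sigma_norm2 r s D (wt - wk) = d \<bullet> S d"
  proof -
    have "wt - wk = - d" by (simp add: d_def)
    then show ?thesis by (simp only: Sigma_norm2_def S_def Sm_neg inner_minus_left inner_minus_right minus_minus)
  qed
  have e4: "a \<bullet> S d = d \<bullet> S d + (wt - ws) \<bullet> S d"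
    by (simp add: a_def d_def inner_diff_left[symmetric] inner_add_left[symmetric])
  have "\<gamma> * (a \<bullet> S d) \<ge> \<gamma> * (d \<bullet> S d)" using e4 key gamma d_def by simp
  note ineq = this
  have e5: "Sigma_norm2 r s D (wk - ws) = a \<bullet> S a" by (simp add: Sigma_norm2_def S_def a_def)
  have e6: "\<gamma> * (2 - \<gamma>) * (d \<bullet> S d) = 2 * (\<gamma> * (d \<bullet> S d)) - \<gamma>^2 * (d \<bullet> S d)"
    by (simp add: algebra_simps power2_eq_square)
  have e7: "2 * \<gamma> * (a \<bullet> S d) = 2 * (\<gamma> * (a \<bullet> S d))" by simp
  show "Sigma_norm2 r s (DPhi (fst wt)) ((wk - \<gamma> *\<^sub>R (wk - wt)) - ws)
             \<le> Sigma_norm2 r s (DPhi (fst wt)) (wk - ws)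
                - \<gamma> * (2 - \<gamma>) * Sigma_norm2 r s (DPhi (fst wt)) (wt - wk)"
    unfolding D_def[symmetric] e1 e2 e3 e5 e6 e7 using ineq by linarith
qed

end
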